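(* Let $\mathcal A$ be a well-structured abstract domain, and let monotone abstract operators $\llbracket e\rrbracket^\#:\mathcal A\to\mathcal A$ be given for each basic command $e$, extended inductively to all programs as described in the context. (1) If $\llbracket e\rrbracket^\#$ is a sound abstraction of $\llbracket e\rrbracket$ for every basic command $e$, then $\llbracket S\rrbracket^\#$ is a sound abstraction of $\llbracket S\rrbracket$ for every program $S$. (2) If $\llbracket e\rrbracket^\#$ is a complete abstraction of $\llbracket e\rrbracket$ for every basic command $e$, then $\llbracket S\rrbracket^\#$ is a complete abstraction of $\llbracket S\rrbracket$ for every program $S$.
   Context: Fix a finite set $V$ of quantum variables, each a qubit with state space $\mathcal H_q\cong\mathbb C^2$; for $W\subseteq V$, $\mathcal H_W=\bigotimes_{q\in W}\mathcal H_q$. Operators and subspaces on $\mathcal H_W$ are identified with their cylindrical extensions to $\mathcal H_V$, and a subspace is identified with its orthogonal projector; $P^\perp$ is the orthocomplement. $\mathcal D(\mathcal H_V)$ is the set of partial density operators (positive, trace $\le1$). Programs: $S::=\mathbf{skip}\mid \bar q:=|0\rangle\mid \bar q\mathrel{*{=}}U\mid \mathbf{assert}\ P[\bar q]\mid S_0;S_1\mid \mathbf{if}\ P[\bar q]\ \mathbf{then}\ S_1\ \mathbf{else}\ S_0\ \mathbf{end}\mid\mathbf{while}\ P[\bar q]\ \mathbf{do}\ S\ \mathbf{end}$, with $\bar q=q_1,\dots,q_t$ distinct variables, $U$ unitary on $\mathcal H_{\bar q}$, $P$ a subspace of $\mathcal H_{\bar q}$; the first four forms are the basic commands. Semantics $\llbracket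 S\rrbracket:\mathcal D(\mathcal H_V)\to\mathcal D(\mathcal H_V)$: $\llbracket\mathbf{skip}\rrbracket(\rho)=\rho$; $\llbracket\bar q:=|0\rangle\rrbracket(\rho)=\sum_{i=0}^{2^t-1}|0\rangle_{\bar q}\langle i|\rho|i\rangle_{\bar q}\langle0|$; $\llbracket\bar q\mathrel{*{=}}U\rrbracket(\rho)=U\rho U^\dagger$; $\llbracket\mathbf{assert}\ P[\bar q]\rrbracket(\rho)=P\rho P$; $\llbracket S_0;S_1\rrbracket=\llbracket S_1\rrbracket\circ\llbracket S_0\rrbracket$; $\llbracket\mathbf{if}\ P[\bar q]\ \mathbf{then}\ S_1\ \mathbf{else}\ S_0\ \mathbf{end}\rrbracket(\rho)=\llbracket\mathbf{assert}\ P[\bar q];S_1\rrbracket(\rho)+\llbracket\mathbf{assert}\ P^\perp[\bar q];S_0\rrbracket(\rho)$; $\llbracket\mathbf{while}\ P[\bar q]\ \mathbf{do}\ S\ \mathbf{end}\rrbracket(\rho)=\sum_{i\ge0}\llbracket(\mathbf{assert}\ P[\bar q];S)^i;\mathbf{assert}\ P^\perp[\bar q]\rrbracket(\rho)$, where $T^i$ is $i$-fold sequential composition ($T^0=\mathbf{skip}$). The concrete domain is $\mathcal Q=2^{\mathcal D(\mathcal H_V)}$ ordered by inclusion, and $\llbracket S\rrbracket(R)=\{\llbracket S\rrbracket(\rho):\rho\in R\}$. A pair of monotone maps $(\alpha,\gamma)$ between posets is a Galois connection if $c\le\gamma(a)\iff\alpha(c)\le a$, and a Galois embedding if moreover $\alpha\circ\gamma=\mathrm{id}$.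 A complete lattice $(\mathcal A,\le_{\mathcal A},\vee,\wedge,\bot,\top)$ with monotone $\alpha:\mathcal Q\to\mathcal A$, $\gamma:\mathcal A\to\mathcal Q$ is a well-structured abstract domain if (a) $(\alpha,\gamma)$ is a Galois embedding, and (b) for any family $\rho_i\in\mathcal D(\mathcal H_V)$ and reals $x_i>0$ with $\sum_i x_i\rho_i\in\mathcal D(\mathcal H_V)$, $\alpha(\sum_i x_i\rho_i)=\bigvee_i\alpha(\rho_i)$, where $\alpha(\rho)=\alpha(\{\rho\})$. For $f:\mathcal Q\to\mathcal Q$, an operator $f^\#:\mathcal A\to\mathcal A$ is a sound abstraction of $f$ if $\alpha(f(R))\le_{\mathcal A}f^\#(\alpha(R))$ for all $R\in\mathcal Q$, and a complete abstraction if equality holds for all $R$. Given monotone $\llbracket e\rrbracket^\#$ for basic commands $e$, the operators $\llbracket S\rrbracket^\#$ for composite programs are defined inductively: $\llbracket S_0;S_1\rrbracket^\#=\llbracket S_1\rrbracket^\#\circ\llbracket S_0\rrbracket^\#$; $\llbracket\mathbf{if}\ P[\bar q]\ \mathbf{then}\ S_1\ \mathbf{else}\ S_0\ \mathbf{end}\rrbracket^\#(a)=\llbracket\mathbf{assert}\ P[\bar q];S_1\rrbracket^\#(a)\vee\llbracket\mathbf{assert}\ P^\perp[\bar q];S_0\rrbracket^\#(a)$; $\llbracket\mathbf{while}\ P[\bar q]\ \mathbf{do}\ S\ \mathbf{end}\rrbracket^\#(a)=\bigvee_{i\ge0}\llbracket(\mathbf{assert}\ P[\bar q];S)^i;\mathbf{assert}\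 P^\perp[\bar q]\rrbracket^\#(a)$. *)

theory Defs
  imports "HOL-Analysis.Infinite_Sum" "Jordan_Normal_Form.Schur_Decomposition"
begin

text \<open>The quantum variables are the qubits 0,...,n-1 (V = {0..<n}).  H_V = C^(2^n); the
computational basis vector with index i (i < 2^n) assigns to qubit q the bit (i div 2^q) mod 2.\<close>

definition qdim :: "nat \<Rightarrow> nat" where "qdim n = 2 ^ n"

definition qbit :: "nat \<Rightarrow> nat \<Rightarrow> nat" where "qbit i q = (i div 2 ^ q) mod 2"

text \<open>Local index of a global basis index w.r.t. the register qs = q_1,...,q_t
  (q_1 is the least significant local bit).\<close>
definition loc_idx :: "nat list \<Rightarrow> nat \<Rightarrow> nat" where
  "loc_idx qs i = (\<Sum>k<length qs. qbit i (qs ! k) * 2 ^ k)"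

text \<open>Cylindrical extension A (x) I_{V - qs} of an operator A on H_qs to H_V.\<close>
definition cyl :: "nat \<Rightarrow> nat list \<Rightarrow> complex mat \<Rightarrow> complex mat" where
  "cyl n qs A = mat (qdim n) (qdim n)
     (\<lambda>(i, j). if (\<forall>q<n. q \<notin> set qs \<longrightarrow> qbit i q = qbit j q)
               then A $$ (loc_idx qs i, loc_idx qs j) else 0)"

definition is_projector :: "nat \<Rightarrow> complex mat \<Rightarrow> bool" where
  "is_projector m P \<longleftrightarrow> P \<in> carrier_mat m m \<and> P * P = P \<and> mat_adjoint P = P"

definition is_unitary :: "nat \<Rightarrow> complex mat \<Rightarrow> bool" where
  "is_unitary m U \<longleftrightarrow> U \<in> carrier_mat m m \<and> U * mat_adjoint U = 1\<^sub>m m"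

text \<open>Orthocomplement of a subspace (given by its projector) of H_qs.\<close>
definition ortho :: "nat list \<Rightarrow> complex mat \<Rightarrow> complex mat" where
  "ortho qs P = 1\<^sub>m (2 ^ length qs) - P"

definition positive_op :: "nat \<Rightarrow> complex mat \<Rightarrow> bool" where
  "positive_op d A \<longleftrightarrow> A \<in> carrier_mat d d \<and>
     (\<forall>v \<in> carrier_vec d. let z = (\<Sum>i<d. cnj (vec_index v i) * vec_index (A *\<^sub>v v) i) in Im z = 0 \<and> 0 \<le> Re z)"

definition pdo :: "nat \<Rightarrow> complex mat set" where
  "pdo n = {\<rho>. positive_op (qdim n) \<rho> \<and> Re (\<Sum>i<qdim n. \<rho> $$ (i, i)) \<le> 1}"

definition mat_fsum :: "nat \<Rightarrow> (nat \<Rightarrow> complex mat) \<Rightarrow> nat \<Rightarrow> complex mat" where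
  "mat_fsum d M K = mat d d (\<lambda>(r, c). \<Sum>k<K. M k $$ (r, c))"

definition mat_suminf :: "nat \<Rightarrow> (nat \<Rightarrow> complex mat) \<Rightarrow> complex mat" where
  "mat_suminf d M = mat d d (\<lambda>(r, c). \<Sum>k. M k $$ (r, c))"

datatype bcmd =
    Skip
  | Init "nat list"                 (* qs := |0> *)
  | Apply "nat list" "complex mat"  (* qs *= U *)
  | Assert "nat list" "complex mat" (* assert P[qs], P given by its projector on H_qs *)

datatype prog =
    Basic bcmd
  | Seq prog prog
  | If "nat list" "complex mat" prog prog (* if P[qs] then S1 else S0 end *)
  | While "nat list" "complex mat" prog

definition wf_reg :: "nat \<Rightarrow> nat list \<Rightarrow> bool" where
  "wf_reg n qs \<longleftrightarrow> distinct qs \<and> set qs \<subseteq> {..<n}"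

fun wf_bcmd :: "nat \<Rightarrow> bcmd \<Rightarrow> bool" where
  "wf_bcmd n Skip = True"
| "wf_bcmd n (Init qs) = wf_reg n qs"
| "wf_bcmd n (Apply qs U) = (wf_reg n qs \<and> is_unitary (2 ^ length qs) U)"
| "wf_bcmd n (Assert qs P) = (wf_reg n qs \<and> is_projector (2 ^ length qs) P)"

fun wf_prog :: "nat \<Rightarrow> prog \<Rightarrow> bool" where
  "wf_prog n (Basic e) = wf_bcmd n e"
| "wf_prog n (Seq S0 S1) = (wf_prog n S0 \<and> wf_prog n S1)"
| "wf_prog n (If qs P S1 S0) =
     (wf_reg n qs \<and> is_projector (2 ^ length qs) P \<and> wf_prog n S1 \<and> wf_prog n S0)"
| "wf_prog n (While qs P S) =
     (wf_reg n qs \<and> is_projector (2 ^ length qs) P \<and> wf_prog n S)"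

definition ket0bra :: "nat \<Rightarrow> nat \<Rightarrow> complex mat" where
  "ket0bra m i = mat m m (\<lambda>(r, c). if r = 0 \<and> c = i then 1 else 0)"

fun bsem :: "nat \<Rightarrow> bcmd \<Rightarrow> complex mat \<Rightarrow> complex mat" where
  "bsem n Skip \<rho> = \<rho>"
| "bsem n (Init qs) \<rho> =
     mat_fsum (qdim n)
       (\<lambda>i. cyl n qs (ket0bra (2 ^ length qs) i) * \<rho> *
            mat_adjoint (cyl n qs (ket0bra (2 ^ length qs) i)))
       (2 ^ length qs)"
| "bsem n (Apply qs U) \<rho> = cyl n qs U * \<rho> * mat_adjoint (cyl n qs U)"
| "bsem n (Assert qs P) \<rho> = cyl n qs P * \<rho> * cyl n qs P"

primrec csem :: "prog \<Rightarrow> nat \<Rightarrow> complex mat \<Rightarrow> complex mat" where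
  "csem (Basic e) n = bsem n e"
| "csem (Seq S0 S1) n = csem S1 n \<circ> csem S0 n"
| "csem (If qs P S1 S0) n =
     (\<lambda>\<rho>. csem S1 n (bsem n (Assert qs P) \<rho>) + csem S0 n (bsem n (Assert qs (ortho qs P)) \<rho>))"
| "csem (While qs P S) n =
     (\<lambda>\<rho>. mat_suminf (qdim n)
        (\<lambda>i. bsem n (Assert qs (ortho qs P)) (((csem S n \<circ> bsem n (Assert qs P)) ^^ i) \<rho>)))"

text \<open>For while loops, T^0 = skip contributes the abstract skip operator, and T^i (i >= 1)
  is the i-fold composition of T = (assert P; S).\<close>
primrec asem :: "(bcmd \<Rightarrow> 'a::complete_lattice \<Rightarrow> 'a) \<Rightarrow> prog \<Rightarrow> 'a \<Rightarrow> 'a" where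
  "asem ab (Basic e) = ab e"
| "asem ab (Seq S0 S1) = asem ab S1 \<circ> asem ab S0"
| "asem ab (If qs P S1 S0) =
     (\<lambda>a. sup (asem ab S1 (ab (Assert qs P) a)) (asem ab S0 (ab (Assert qs (ortho qs P)) a)))"
| "asem ab (While qs P S) =
     (\<lambda>a. SUP i. ab (Assert qs (ortho qs P))
                 ((if i = 0 then ab Skip else (asem ab S \<circ> ab (Assert qs P)) ^^ i) a))"

text \<open>Concrete domain Q = subsets of pdo n, ordered by inclusion.\<close>
definition well_structured ::
  "nat \<Rightarrow> (complex mat set \<Rightarrow> 'a::complete_lattice) \<Rightarrow> ('a \<Rightarrow> complex mat set) \<Rightarrow> bool" where
  "well_structured n \<alpha> \<gamma> \<longleftrightarrow>
     (\<forall>R R'. R \<subseteq> R' \<and> R' \<subseteq> pdo n \<longrightarrow> \<alpha> R \<le> \<alpha> R') \<and>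
     (\<forall>a. \<gamma> a \<subseteq> pdo n) \<and> mono \<gamma> \<and>
     (\<forall>R a. R \<subseteq> pdo n \<longrightarrow> (R \<subseteq> \<gamma> a \<longleftrightarrow> \<alpha> R \<le> a)) \<and>
     (\<forall>a. \<alpha> (\<gamma> a) = a) \<and>
     (\<forall>(I :: nat set) (\<rho> :: nat \<Rightarrow> complex mat) (x :: nat \<Rightarrow> real) S.
        I \<noteq> {} \<and> (\<forall>i\<in>I. \<rho> i \<in> pdo n \<and> x i > 0) \<and> S \<in> pdo n \<and>
        (\<forall>r<qdim n. \<forall>c<qdim n. ((\<lambda>i. complex_of_real (x i) * \<rho> i $$ (r, c)) has_sum S $$ (r, c)) I)
        \<longrightarrow> \<alpha> {S} = (SUP i\<in>I. \<alpha> {\<rho> i}))"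

definition sound_abs ::
  "nat \<Rightarrow> (complex mat set \<Rightarrow> 'a::complete_lattice) \<Rightarrow> (complex mat \<Rightarrow> complex mat) \<Rightarrow> ('a \<Rightarrow> 'a) \<Rightarrow> bool" where
  "sound_abs n \<alpha> f fa \<longleftrightarrow> (\<forall>R. R \<subseteq> pdo n \<longrightarrow> \<alpha> (f ` R) \<le> fa (\<alpha> R))"

definition complete_abs ::
  "nat \<Rightarrow> (complex mat set \<Rightarrow> 'a::complete_lattice) \<Rightarrow> (complex mat \<Rightarrow> complex mat) \<Rightarrow> ('a \<Rightarrow> 'a) \<Rightarrow> bool" where
  "complete_abs n \<alpha> f fa \<longleftrightarrow> (\<forall>R. R \<subseteq> pdo n \<longrightarrow> \<alpha> (f ` R) = fa (\<alpha> R))"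

end

theory Submission
  imports Defs
begin



lemma binsum_digit:
  "(\<forall>k. b k < (2::nat)) \<Longrightarrow> ((\<Sum>k<t. b k * 2 ^ k) div 2 ^ p) mod 2 = (if p < t then b p else 0)"
proof (induction t arbitrary: b p)
  case 0 then show ?case by simp
next
  case (Suc t)
  have e: "(\<Sum>k<Suc t. b k * 2 ^ k) = b 0 + 2 * (\<Sum>k<t. b (Suc k) * 2 ^ k)"
    by (subst sum.lessThan_Suc_shift) (simp add: sum_distrib_left ac_simps)
  have b0: "b 0 < 2" using Suc.prems by auto
  show ?case
  proof (cases p)
    case 0 then show ?thesis using b0 unfolding e by simp
  next
    case (Suc p')
    define X where "X = (\<Sum>k<t. b (Suc k) * 2 ^ k)"
    have d2: "(b 0 + 2 * X) div 2 = X" using b0 by simp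
    have "(b 0 + 2 * (\<Sum>k<t. b (Suc k) * 2 ^ k)) div 2 ^ p = ((\<Sum>k<t. b (Suc k) * 2 ^ k)) div 2 ^ p'"
      unfolding X_def[symmetric] using Suc d2 by (simp add: div_mult2_eq)
    then show ?thesis using Suc.IH[of "\<lambda>k. b (Suc k)" p'] Suc.prems Suc unfolding e by simp
  qed
qed

lemma binsum_less:
  "(\<forall>k. b k < (2::nat)) \<Longrightarrow> (\<Sum>k<t. b k * 2 ^ k) < 2 ^ t"
proof (induction t)
  case 0 then show ?case by simp
next
  case (Suc t)
  have "b t \<le> 1" using Suc.prems[rule_format, of t] by simp
  then have m1: "b t * 2 ^ t \<le> 2 ^ t" using mult_right_mono[of "b t" 1 "2^t"] by simp
  have m2: "(\<Sum>k<t. b k * 2 ^ k) < 2 ^ t" using Suc by simp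
  have "(\<Sum>k<Suc t. b k * 2 ^ k) = (\<Sum>k<t. b k * 2 ^ k) + b t * 2 ^ t" by simp
  also have "\<dots> < 2 ^ t + 2 ^ t" using m1 m2 by linarith
  finally show ?case by simp
qed

lemma bin_expand:
  "(m::nat) < 2 ^ t \<Longrightarrow> (\<Sum>p<t. ((m div 2 ^ p) mod 2) * 2 ^ p) = m"
proof (induction t arbitrary: m)
  case 0 then show ?case by simp
next
  case (Suc t)
  have h: "m div 2 < 2 ^ t" using Suc.prems by auto
  have "(\<Sum>p<Suc t. ((m div 2 ^ p) mod 2) * 2 ^ p) = m mod 2 + 2 * (\<Sum>p<t. (((m div 2) div 2 ^ p) mod 2) * 2 ^ p)"
    by (subst sum.lessThan_Suc_shift) (simp add: sum_distrib_left div_mult2_eq ac_simps)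
  also have "\<dots> = m" using Suc.IH[OF h] by simp
  finally show ?case .
qed

lemma qbit_less2: "qbit i q < 2" by (simp add: qbit_def)

lemma loc_idx_less: "loc_idx qs i < 2 ^ length qs"
  unfolding loc_idx_def using binsum_less[of "\<lambda>k. qbit i (qs ! k)"] qbit_less2 by auto

lemma loc_idx_digit:
  "p < length qs \<Longrightarrow> (loc_idx qs i div 2 ^ p) mod 2 = qbit i (qs ! p)"
  unfolding loc_idx_def using binsum_digit[of "\<lambda>k. qbit i (qs ! k)" "length qs" p] qbit_less2 by auto

lemma qbit_inj:
  assumes "i < 2 ^ n" "j < 2 ^ n" "\<forall>q<n. qbit i q = qbit j q"
  shows "i = j"
proof -
  have "i = (\<Sum>p<n. qbit i p * 2 ^ p)" using bin_expand[OF assms(1)] by (simp add: qbit_def)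
  also have "\<dots> = (\<Sum>p<n. qbit j p * 2 ^ p)" using assms(3) by simp
  also have "\<dots> = j" using bin_expand[OF assms(2)] by (simp add: qbit_def)
  finally show ?thesis .
qed

definition agree :: "nat \<Rightarrow> nat list \<Rightarrow> nat \<Rightarrow> nat \<Rightarrow> bool" where
  "agree n qs i j \<longleftrightarrow> (\<forall>q<n. q \<notin> set qs \<longrightarrow> qbit i q = qbit j q)"

lemma agree_inj:
  assumes "set qs \<subseteq> {..<n}" "i < 2 ^ n" "j < 2 ^ n" "agree n qs i j" "loc_idx qs i = loc_idx qs j"
  shows "i = j"
proof (rule qbit_inj[OF assms(2,3)], intro allI impI)
  fix q assume q: "q < n"
  show "qbit i q = qbit j q"
  proof (cases "q \<in> set qs")
    case True
    then obtain p where p: "p < length qs" "q = qs ! p" by (metis in_set_conv_nth)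
    then show ?thesis using loc_idx_digit[OF p(1), of i] loc_idx_digit[OF p(1), of j] assms(5) by simp
  next
    case False then show ?thesis using assms(4) q by (simp add: agree_def)
  qed
qed

lemma agree_surj:
  assumes wf: "wf_reg n qs" and i: "i < 2 ^ n" and m: "m < 2 ^ length qs"
  shows "\<exists>k < 2 ^ n. agree n qs i k \<and> loc_idx qs k = m"
proof -
  define b where "b q = (if q \<in> set qs then (m div 2 ^ (THE p. p < length qs \<and> qs ! p = q)) mod 2 else qbit i q)" for q
  have b2: "\<forall>q. b q < 2" by (simp add: b_def qbit_def)
  define k where "k = (\<Sum>q<n. b q * 2 ^ q)"
  have kl: "k < 2 ^ n" unfolding k_def using binsum_less[OF b2] .
  have kb: "qbit k q = b q" if "q < n" for q
    unfolding k_def qbit_def using binsum_digit[OF b2, of n q] that by simp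
  have ag: "agree n qs i k" unfolding agree_def using kb by (simp add: b_def)
  have qsn: "\<And>p. p < length qs \<Longrightarrow> qs ! p < n" using wf nth_mem unfolding wf_reg_def by (meson lessThan_iff subsetD)
  have "loc_idx qs k = (\<Sum>p<length qs. ((m div 2 ^ p) mod 2) * 2 ^ p)"
    unfolding loc_idx_def
  proof (rule sum.cong[OF refl])
    fix p assume "p \<in> {..<length qs}"
    then have p: "p < length qs" by simp
    have "(THE p'. p' < length qs \<and> qs ! p' = qs ! p) = p"
      using wf p unfolding wf_reg_def by (auto intro!: the_equality simp: nth_eq_iff_index_eq)
    then show "qbit k (qs ! p) * 2 ^ p = m div 2 ^ p mod 2 * 2 ^ p"
      using kb[OF qsn[OF p]] p by (simp add: b_def)
  qed
  also have "\<dots> = m" using bin_expand[OF m] .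
  finally show ?thesis using kl ag by blast
qed




lemma mult_entry:
  assumes "A \<in> carrier_mat d m" "B \<in> carrier_mat m e" "i < d" "j < e"
  shows "(A * B) $$ (i, j) = (\<Sum>k<m. A $$ (i, k) * B $$ (k, j))"
  using assms by (simp add: scalar_prod_def atLeast0LessThan)

lemma mult_vec_entry:
  assumes "A \<in> carrier_mat d m" "v \<in> carrier_vec m" "i < d"
  shows "(A *\<^sub>v v) $ i = (\<Sum>k<m. A $$ (i, k) * v $ k)"
  using assms by (simp add: scalar_prod_def atLeast0LessThan)

lemma adj_carrier: "A \<in> carrier_mat a b \<Longrightarrow> mat_adjoint A \<in> carrier_mat b a"
  unfolding mat_adjoint_def by auto

lemma adj_index: "A \<in> carrier_mat a b \<Longrightarrow> i < b \<Longrightarrow> j < a \<Longrightarrow> mat_adjoint A $$ (i, j) = cnj (A $$ (j, i))"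
  unfolding mat_adjoint_def by (auto simp: mat_of_rows_def)

lemma cyl_carrier: "cyl n qs A \<in> carrier_mat (qdim n) (qdim n)"
  unfolding cyl_def by auto

lemma cyl_index: "i < qdim n \<Longrightarrow> j < qdim n \<Longrightarrow>
   cyl n qs A $$ (i, j) = (if agree n qs i j then A $$ (loc_idx qs i, loc_idx qs j) else 0)"
  unfolding cyl_def agree_def by auto

lemma agree_sym: "agree n qs i j \<Longrightarrow> agree n qs j i" unfolding agree_def by auto
lemma agree_trans: "agree n qs i j \<Longrightarrow> agree n qs j k \<Longrightarrow> agree n qs i k" unfolding agree_def by auto
lemma agree_refl: "agree n qs i i" unfolding agree_def by auto

lemma loc_bij:
  assumes wf: "wf_reg n qs" and i: "i < qdim n"
  shows "bij_betw (loc_idx qs) {k. k < qdim n \<and> agree n qs i k} {..<2 ^ length qs}"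
proof (rule bij_betw_imageI)
  have sub: "set qs \<subseteq> {..<n}" using wf unfolding wf_reg_def by auto
  show "inj_on (loc_idx qs) {k. k < qdim n \<and> agree n qs i k}"
  proof (rule inj_onI)
    fix x y assume x: "x \<in> {k. k < qdim n \<and> agree n qs i k}" and y: "y \<in> {k. k < qdim n \<and> agree n qs i k}"
      and e: "loc_idx qs x = loc_idx qs y"
    have "agree n qs x y" using x y agree_trans[OF agree_sym] by blast
    then show "x = y" using agree_inj[OF sub _ _ _ e] x y by (simp add: qdim_def)
  qed
  show "loc_idx qs ` {k. k < qdim n \<and> agree n qs i k} = {..<2 ^ length qs}"
  proof
    show "loc_idx qs ` {k. k < qdim n \<and> agree n qs i k} \<subseteq> {..<2 ^ length qs}"
      using loc_idx_less by auto
    show "{..<2 ^ length qs} \<subseteq> loc_idx qs ` {k. k < qdim n \<and> agree n qs i k}"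
    proof
      fix m :: nat assume "m \<in> {..<2 ^ length qs}"
      then obtain k where "k < 2 ^ n" "agree n qs i k" "loc_idx qs k = m"
        using agree_surj[OF wf, of i m] i by (auto simp: qdim_def)
      then show "m \<in> loc_idx qs ` {k. k < qdim n \<and> agree n qs i k}" by (auto simp: qdim_def)
    qed
  qed
qed

lemma cyl_mult:
  assumes wf: "wf_reg n qs" and A: "A \<in> carrier_mat (2 ^ length qs) (2 ^ length qs)"
    and B: "B \<in> carrier_mat (2 ^ length qs) (2 ^ length qs)"
  shows "cyl n qs A * cyl n qs B = cyl n qs (A * B)"
proof (rule eq_matI)
  let ?d = "qdim n" and ?t = "2 ^ length qs"
  show "dim_row (cyl n qs A * cyl n qs B) = dim_row (cyl n qs (A * B))"
       "dim_col (cyl n qs A * cyl n qs B) = dim_col (cyl n qs (A * B))"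
    using cyl_carrier by (auto simp: cyl_def)
  fix i j assume "i < dim_row (cyl n qs (A * B))" "j < dim_col (cyl n qs (A * B))"
  then have i: "i < ?d" and j: "j < ?d" by (auto simp: cyl_def)
  have "(cyl n qs A * cyl n qs B) $$ (i, j) = (\<Sum>k<?d. cyl n qs A $$ (i, k) * cyl n qs B $$ (k, j))"
    using mult_entry[OF cyl_carrier cyl_carrier i j] .
  also have "\<dots> = (\<Sum>k<?d. if agree n qs i k \<and> agree n qs k j then
        A $$ (loc_idx qs i, loc_idx qs k) * B $$ (loc_idx qs k, loc_idx qs j) else 0)"
    by (rule sum.cong[OF refl]) (simp add: cyl_index i j)
  also have "\<dots> = cyl n qs (A * B) $$ (i, j)"
  proof (cases "agree n qs i j")
    case True
    let ?g = "\<lambda>m. A $$ (loc_idx qs i, m) * B $$ (m, loc_idx qs j)"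
    have "(\<Sum>k<?d. if agree n qs i k \<and> agree n qs k j then ?g (loc_idx qs k) else 0)
        = (\<Sum>k<?d. if agree n qs i k then ?g (loc_idx qs k) else 0)"
      by (rule sum.cong[OF refl]) (meson True agree_trans agree_sym)
    also have "\<dots> = (\<Sum>k\<in>{k. k < ?d \<and> agree n qs i k}. ?g (loc_idx qs k))"
      by (simp add: sum.inter_filter[symmetric] lessThan_def)
    also have "\<dots> = (\<Sum>m<?t. ?g m)"
      using sum.reindex_bij_betw[OF loc_bij[OF wf i], of ?g] by simp
    also have "\<dots> = (A * B) $$ (loc_idx qs i, loc_idx qs j)"
      using mult_entry[OF A B loc_idx_less loc_idx_less] by simp
    finally show ?thesis using True by (simp add: cyl_index i j)
  next
    case False
    have "(\<Sum>k<?d. if agree n qs i k \<and> agree n qs k j then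
        A $$ (loc_idx qs i, loc_idx qs k) * B $$ (loc_idx qs k, loc_idx qs j) else 0) = 0"
      by (rule sum.neutral) (meson False agree_trans)
    then show ?thesis using False by (simp add: cyl_index i j)
  qed
  finally show "(cyl n qs A * cyl n qs B) $$ (i, j) = cyl n qs (A * B) $$ (i, j)" .
qed

lemma cyl_adj:
  assumes A: "A \<in> carrier_mat (2 ^ length qs) (2 ^ length qs)"
  shows "mat_adjoint (cyl n qs A) = cyl n qs (mat_adjoint A)"
proof (rule eq_matI)
  show "dim_row (mat_adjoint (cyl n qs A)) = dim_row (cyl n qs (mat_adjoint A))"
       "dim_col (mat_adjoint (cyl n qs A)) = dim_col (cyl n qs (mat_adjoint A))"
    by (auto simp: cyl_def mat_adjoint_def)
  fix i j assume "i < dim_row (cyl n qs (mat_adjoint A))" "j < dim_col (cyl n qs (mat_adjoint A))"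
  then have i: "i < qdim n" and j: "j < qdim n" by (auto simp: cyl_def)
  show "mat_adjoint (cyl n qs A) $$ (i, j) = cyl n qs (mat_adjoint A) $$ (i, j)"
    using adj_index[OF cyl_carrier i j] adj_index[OF A loc_idx_less loc_idx_less]
    using agree_sym[of n qs i j] agree_sym[of n qs j i] by (auto simp: cyl_index i j)
qed

lemma cyl_one:
  assumes wf: "wf_reg n qs"
  shows "cyl n qs (1\<^sub>m (2 ^ length qs)) = 1\<^sub>m (qdim n)"
proof (rule eq_matI)
  show "dim_row (cyl n qs (1\<^sub>m (2 ^ length qs))) = dim_row (1\<^sub>m (qdim n))"
       "dim_col (cyl n qs (1\<^sub>m (2 ^ length qs))) = dim_col (1\<^sub>m (qdim n))"
    by (auto simp: cyl_def)
  have sub: "set qs \<subseteq> {..<n}" using wf unfolding wf_reg_def by auto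
  fix i j assume "i < dim_row (1\<^sub>m (qdim n))" "j < dim_col (1\<^sub>m (qdim n))"
  then have i: "i < qdim n" and j: "j < qdim n" by auto
  show "cyl n qs (1\<^sub>m (2 ^ length qs)) $$ (i, j) = 1\<^sub>m (qdim n) $$ (i, j)"
    using agree_inj[OF sub, of i j] i j loc_idx_less[of qs i] loc_idx_less[of qs j]
    by (auto simp: cyl_index qdim_def agree_refl)
qed

lemma cyl_P_ortho:
  assumes wf: "wf_reg n qs" and P: "P \<in> carrier_mat (2 ^ length qs) (2 ^ length qs)"
  shows "cyl n qs P + cyl n qs (ortho qs P) = 1\<^sub>m (qdim n)"
proof -
  have "cyl n qs P + cyl n qs (ortho qs P) = cyl n qs (1\<^sub>m (2 ^ length qs))"
  proof (rule eq_matI)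
    fix i j assume "i < dim_row (cyl n qs (1\<^sub>m (2 ^ length qs)))" "j < dim_col (cyl n qs (1\<^sub>m (2 ^ length qs)))"
    then have i: "i < qdim n" and j: "j < qdim n" by (auto simp: cyl_def)
    have e: "(cyl n qs P + cyl n qs (ortho qs P)) $$ (i, j) = cyl n qs P $$ (i, j) + cyl n qs (ortho qs P) $$ (i, j)"
      by (metis cyl_carrier carrier_matD index_add_mat(1) i j)
    show "(cyl n qs P + cyl n qs (ortho qs P)) $$ (i, j) = cyl n qs (1\<^sub>m (2 ^ length qs)) $$ (i, j)"
      unfolding e using P loc_idx_less[of qs i] loc_idx_less[of qs j] i j cyl_carrier[of n qs]
      by (auto simp: cyl_index ortho_def)
  qed (auto simp: cyl_def)
  then show ?thesis using cyl_one[OF wf] by simp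
qed




definition qf :: "nat \<Rightarrow> complex mat \<Rightarrow> complex vec \<Rightarrow> complex" where
  "qf d A v = (\<Sum>i<d. cnj (v $ i) * (A *\<^sub>v v) $ i)"

definition tr :: "nat \<Rightarrow> complex mat \<Rightarrow> complex" where
  "tr d A = (\<Sum>i<d. A $$ (i, i))"

lemma pos_def2: "positive_op d A \<longleftrightarrow> A \<in> carrier_mat d d \<and>
   (\<forall>v\<in>carrier_vec d. Im (qf d A v) = 0 \<and> 0 \<le> Re (qf d A v))"
  unfolding positive_op_def qf_def Let_def by simp

lemma qf_expand:
  assumes "A \<in> carrier_mat d d" "v \<in> carrier_vec d"
  shows "qf d A v = (\<Sum>i<d. cnj (v $ i) * (\<Sum>k<d. A $$ (i, k) * v $ k))"
  unfolding qf_def by (rule sum.cong[OF refl]) (simp add: mult_vec_entry[OF assms])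

lemma qf_conj:
  assumes K: "K \<in> carrier_mat d d" and r: "\<rho> \<in> carrier_mat d d" and v: "v \<in> carrier_vec d"
  shows "qf d (K * \<rho> * mat_adjoint K) v = qf d \<rho> (mat_adjoint K *\<^sub>v v)"
proof -
  have Ka: "mat_adjoint K \<in> carrier_mat d d" using adj_carrier[OF K] .
  define u where "u = mat_adjoint K *\<^sub>v v"
  have u: "u \<in> carrier_vec d" using Ka v by (simp add: u_def)
  define w where "w = \<rho> *\<^sub>v u"
  have w: "w \<in> carrier_vec d" using r u by (simp add: w_def)
  have e1: "(K * \<rho> * mat_adjoint K) *\<^sub>v v = K *\<^sub>v w"
  proof -
    have Kr: "K * \<rho> \<in> carrier_mat d d" using K r by simp
    have "(K * \<rho> * mat_adjoint K) *\<^sub>v v = (K * \<rho>) *\<^sub>v u"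
      unfolding u_def using assoc_mult_mat_vec[OF Kr Ka v] .
    also have "\<dots> = K *\<^sub>v w" unfolding w_def using assoc_mult_mat_vec[OF K r u] .
    finally show ?thesis .
  qed
  have uk: "cnj (u $ k) = (\<Sum>i<d. K $$ (i, k) * cnj (v $ i))" if "k < d" for k
    using mult_vec_entry[OF Ka v that] adj_index[OF K that] unfolding u_def
    by (simp add: sum_conjugate adj_index[OF K that] )
  have "qf d (K * \<rho> * mat_adjoint K) v = (\<Sum>i<d. cnj (v $ i) * (\<Sum>k<d. K $$ (i, k) * w $ k))"
    unfolding qf_def e1 by (rule sum.cong[OF refl]) (simp add: mult_vec_entry[OF K w])
  also have "\<dots> = (\<Sum>i<d. \<Sum>k<d. cnj (v $ i) * K $$ (i, k) * w $ k)"
    by (simp add: sum_distrib_left mult.assoc)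
  also have "\<dots> = (\<Sum>k<d. \<Sum>i<d. cnj (v $ i) * K $$ (i, k) * w $ k)"
    by (rule sum.swap)
  also have "\<dots> = (\<Sum>k<d. cnj (u $ k) * w $ k)"
    by (rule sum.cong[OF refl]) (simp add: uk sum_distrib_right sum_distrib_left ac_simps)
  also have "\<dots> = qf d \<rho> u" unfolding qf_def w_def ..
  finally show ?thesis unfolding u_def .
qed

lemma psd_conj:
  assumes r: "positive_op d \<rho>" and K: "K \<in> carrier_mat d d"
  shows "positive_op d (K * \<rho> * mat_adjoint K)"
proof -
  have rc: "\<rho> \<in> carrier_mat d d" using r unfolding pos_def2 by auto
  have Ka: "mat_adjoint K \<in> carrier_mat d d" using adj_carrier[OF K] .
  show ?thesis unfolding pos_def2
  proof (intro conjI ballI)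
    show "K * \<rho> * mat_adjoint K \<in> carrier_mat d d" using K rc Ka by simp
    fix v :: "complex vec" assume v: "v \<in> carrier_vec d"
    have u: "mat_adjoint K *\<^sub>v v \<in> carrier_vec d" using Ka v by simp
    show "Im (qf d (K * \<rho> * mat_adjoint K) v) = 0" "0 \<le> Re (qf d (K * \<rho> * mat_adjoint K) v)"
      using r u unfolding qf_conj[OF K rc v] pos_def2 by auto
  qed
qed

lemma qf_add:
  assumes "A \<in> carrier_mat d d" "B \<in> carrier_mat d d" "v \<in> carrier_vec d"
  shows "qf d (A + B) v = qf d A v + qf d B v"
  unfolding qf_def using assms
  by (simp add: add_mult_distrib_mat_vec sum.distrib distrib_left)

lemma psd_add:
  assumes "positive_op d A" "positive_op d B"
  shows "positive_op d (A + B)"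
  using assms unfolding pos_def2 by (auto simp: qf_add)

lemma psd_zero: "positive_op d (0\<^sub>m d d)"
  unfolding pos_def2 qf_def by auto

lemma sum_one_point:
  assumes "r < (d::nat)" "\<And>i. i < d \<Longrightarrow> i \<noteq> r \<Longrightarrow> g i = 0"
  shows "(\<Sum>i<d. g i) = g r"
  using assms by (subst sum.remove[of _ r]) (auto intro!: sum.neutral)

lemma sum_two_point:
  assumes "r < (d::nat)" "c < d" "r \<noteq> c" "\<And>i. i < d \<Longrightarrow> i \<noteq> r \<Longrightarrow> i \<noteq> c \<Longrightarrow> g i = 0"
  shows "(\<Sum>i<d. g i) = g r + g c"
proof -
  have "(\<Sum>i<d. g i) = g r + (\<Sum>i\<in>{..<d} - {r}. g i)" using assms by (subst sum.remove[of _ r]) auto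
  also have "(\<Sum>i\<in>{..<d} - {r}. g i) = g c"
    using assms by (subst sum.remove[of _ c]) (auto intro!: sum.neutral)
  finally show ?thesis .
qed

lemma psd_diag:
  assumes A: "positive_op d A" and i: "i < d"
  shows "Im (A $$ (i, i)) = 0" "0 \<le> Re (A $$ (i, i))"
proof -
  have Ac: "A \<in> carrier_mat d d" using A unfolding pos_def2 by auto
  define v :: "complex vec" where "v = unit_vec d i"
  have v: "v \<in> carrier_vec d" by (simp add: v_def)
  have "qf d A v = A $$ (i, i)"
    unfolding qf_expand[OF Ac v]
    by (subst sum_one_point[OF i]) (auto simp: v_def i intro!: sum_one_point[OF i, THEN trans])
  then show "Im (A $$ (i, i)) = 0" "0 \<le> Re (A $$ (i, i))" using A v unfolding pos_def2 by auto
qed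

lemma qf_two:
  assumes Ac: "A \<in> carrier_mat d d" and rc: "r < d" "c < d" "r \<noteq> c"
  shows "qf d A (vec d (\<lambda>k. if k = r then 1 else if k = c then u else 0))
     = A $$ (r, r) + A $$ (r, c) * u + cnj u * (A $$ (c, r) + A $$ (c, c) * u)"
proof -
  let ?v = "vec d (\<lambda>k. if k = r then 1 else if k = c then u else 0)"
  have v: "?v \<in> carrier_vec d" by simp
  have inner: "(\<Sum>k<d. A $$ (i, k) * ?v $ k) = A $$ (i, r) + A $$ (i, c) * u" for i
    by (subst sum_two_point[OF rc]) (use rc in auto)
  show ?thesis
    unfolding qf_expand[OF Ac v] inner
    by (subst sum_two_point[OF rc]) (use rc in auto)
qed

lemma psd_offdiag:
  assumes A: "positive_op d A" and rc: "r < d" "c < d" "r \<noteq> c"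
  shows "cmod (A $$ (r, c)) \<le> Re (A $$ (r, r)) + Re (A $$ (c, c))"
proof -
  have Ac: "A \<in> carrier_mat d d" using A unfolding pos_def2 by auto
  have Q: "Im (A $$ (r, r) + A $$ (r, c) * u + cnj u * (A $$ (c, r) + A $$ (c, c) * u)) = 0 \<and>
           0 \<le> Re (A $$ (r, r) + A $$ (r, c) * u + cnj u * (A $$ (c, r) + A $$ (c, c) * u))" for u
    using A unfolding pos_def2 qf_two[OF Ac rc, symmetric] by auto
  have da: "Im (A $$ (r, r)) = 0" "Im (A $$ (c, c)) = 0" using psd_diag[OF A] rc by auto
  have q1: "Re (A $$ (r, r)) + Re (A $$ (r, c)) + Re (A $$ (c, r)) + Re (A $$ (c, c)) \<ge> 0"
    using Q[of 1] by simp
  have q2: "Re (A $$ (r, r)) - Re (A $$ (r, c)) - Re (A $$ (c, r)) + Re (A $$ (c, c)) \<ge> 0"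
    using Q[of "-1"] by simp
  have q4: "Re (A $$ (r, r)) - Im (A $$ (r, c)) + Im (A $$ (c, r)) + Re (A $$ (c, c)) \<ge> 0"
    using Q[of "\<i>"] by simp
  have q5: "Re (A $$ (r, r)) + Im (A $$ (r, c)) - Im (A $$ (c, r)) + Re (A $$ (c, c)) \<ge> 0"
    using Q[of "-\<i>"] by simp
  have q6: "Im (A $$ (r, c)) + Im (A $$ (c, r)) = 0" using Q[of 1] da by simp
  have q7: "Re (A $$ (r, c)) - Re (A $$ (c, r)) = 0" using Q[of "\<i>"] da by simp
  show ?thesis using cmod_le[of "A $$ (r, c)"] q1 q2 q4 q5 q6 q7 by linarith
qed

lemma tr_nonneg:
  assumes A: "positive_op d A"
  shows "Im (tr d A) = 0" "0 \<le> Re (tr d A)"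
  using psd_diag[OF A] unfolding tr_def by (auto simp: Im_sum Re_sum intro: sum_nonneg)

lemma diag_le_tr:
  assumes A: "positive_op d A" and i: "i < d"
  shows "Re (A $$ (i, i)) \<le> Re (tr d A)"
  unfolding tr_def Re_sum
  by (rule member_le_sum) (use psd_diag[OF A] i in auto)

lemma entry_bound:
  assumes A: "positive_op d A" and rc: "r < d" "c < d"
  shows "cmod (A $$ (r, c)) \<le> 2 * Re (tr d A)"
proof (cases "r = c")
  case True
  have "cmod (A $$ (r, c)) = Re (A $$ (r, r))"
    using psd_diag[OF A rc(1)] True by (simp add: cmod_eq_Re)
  then show ?thesis using diag_le_tr[OF A rc(1)] tr_nonneg[OF A] by linarith
next
  case False
  show ?thesis using psd_offdiag[OF A rc False] diag_le_tr[OF A rc(1)] diag_le_tr[OF A rc(2)] by linarith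
qed

lemma tr_comm:
  assumes "A \<in> carrier_mat d d" "B \<in> carrier_mat d d"
  shows "tr d (A * B) = tr d (B * A)"
proof -
  have "tr d (A * B) = (\<Sum>i<d. \<Sum>k<d. A $$ (i, k) * B $$ (k, i))"
    unfolding tr_def by (rule sum.cong[OF refl]) (simp add: mult_entry[OF assms])
  also have "\<dots> = (\<Sum>k<d. \<Sum>i<d. B $$ (k, i) * A $$ (i, k))"
    by (subst sum.swap) (simp add: mult.commute)
  also have "\<dots> = tr d (B * A)"
    unfolding tr_def by (rule sum.cong[OF refl]) (simp add: mult_entry[OF assms(2,1)])
  finally show ?thesis .
qed

lemma tr_add:
  assumes "A \<in> carrier_mat d d" "B \<in> carrier_mat d d"
  shows "tr d (A + B) = tr d A + tr d B"
  unfolding tr_def using assms by (simp add: sum.distrib)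

lemma tr_conj:
  assumes K: "K \<in> carrier_mat d d" and r: "\<rho> \<in> carrier_mat d d"
  shows "tr d (K * \<rho> * mat_adjoint K) = tr d (mat_adjoint K * K * \<rho>)"
proof -
  have Ka: "mat_adjoint K \<in> carrier_mat d d" using adj_carrier[OF K] .
  have "tr d (K * \<rho> * mat_adjoint K) = tr d (mat_adjoint K * (K * \<rho>))"
    by (rule tr_comm) (use K r Ka in auto)
  also have "\<dots> = tr d (mat_adjoint K * K * \<rho>)"
    using assoc_mult_mat[OF Ka K r] by simp
  finally show ?thesis .
qed




lemma ortho_proj:
  assumes P: "is_projector (2 ^ length qs) P"
  shows "is_projector (2 ^ length qs) (ortho qs P)"
proof -
  let ?m = "2 ^ length qs"
  have Pc: "P \<in> carrier_mat ?m ?m" and PP: "P * P = P" and Pa: "mat_adjoint P = P"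
    using P unfolding is_projector_def by auto
  have oc: "ortho qs P \<in> carrier_mat ?m ?m" unfolding ortho_def using Pc by (rule minus_carrier_mat)
  have "P * (1\<^sub>m ?m - P) = P * 1\<^sub>m ?m - P * P" using mult_minus_distrib_mat[OF Pc one_carrier_mat Pc] .
  also have "\<dots> = 0\<^sub>m ?m ?m" using Pc PP by simp
  finally have z: "P * (1\<^sub>m ?m - P) = 0\<^sub>m ?m ?m" .
  have "ortho qs P * ortho qs P = 1\<^sub>m ?m * (1\<^sub>m ?m - P) - P * (1\<^sub>m ?m - P)"
    unfolding ortho_def using minus_mult_distrib_mat[OF one_carrier_mat Pc minus_carrier_mat[OF Pc, of "1\<^sub>m ?m"]] by simp
  also have "\<dots> = ortho qs P" unfolding z ortho_def using Pc by (intro eq_matI) auto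
  finally have sq: "ortho qs P * ortho qs P = ortho qs P" .
  have adj: "mat_adjoint (ortho qs P) = ortho qs P"
  proof (rule eq_matI)
    fix i j assume "i < dim_row (ortho qs P)" "j < dim_col (ortho qs P)"
    then have i: "i < ?m" and j: "j < ?m" using oc by auto
    have "P $$ (i, j) = cnj (P $$ (j, i))" using adj_index[OF Pc i j] Pa by simp
    then show "mat_adjoint (ortho qs P) $$ (i, j) = ortho qs P $$ (i, j)"
      using adj_index[OF oc i j] i j Pc by (simp add: ortho_def)
  qed (use adj_carrier[OF oc] oc in auto)
  show ?thesis unfolding is_projector_def using oc sq adj by auto
qed

definition K0 :: "nat \<Rightarrow> nat list \<Rightarrow> nat \<Rightarrow> complex mat" where
  "K0 n qs i = cyl n qs (ket0bra (2 ^ length qs) i)"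

lemma E_entry:
  assumes "a < m" "b < m" "i < m"
  shows "(mat_adjoint (ket0bra m i) * ket0bra m i) $$ (a, b) = (if a = i \<and> b = i then 1 else 0)"
proof -
  have kc: "ket0bra m i \<in> carrier_mat m m" unfolding ket0bra_def by simp
  have "(mat_adjoint (ket0bra m i) * ket0bra m i) $$ (a, b) =
        (\<Sum>c<m. cnj (ket0bra m i $$ (c, a)) * ket0bra m i $$ (c, b))"
    unfolding mult_entry[OF adj_carrier[OF kc] kc assms(1,2)]
    by (rule sum.cong[OF refl]) (simp add: adj_index[OF kc assms(1)])
  also have "\<dots> = (\<Sum>c<m. if c = 0 then (if a = i \<and> b = i then 1 else 0) else 0)"
    by (rule sum.cong[OF refl]) (use assms in \<open>auto simp: ket0bra_def\<close>)
  also have "\<dots> = (if a = i \<and> b = i then 1 else 0)" using assms by simp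
  finally show ?thesis .
qed

lemma pdo_iff: "\<rho> \<in> pdo n \<longleftrightarrow> positive_op (qdim n) \<rho> \<and> Re (tr (qdim n) \<rho>) \<le> 1"
  unfolding pdo_def tr_def by simp

lemma pos_carrier: "positive_op d A \<Longrightarrow> A \<in> carrier_mat d d"
  unfolding pos_def2 by auto

lemma assert_eq:
  assumes P: "is_projector (2 ^ length qs) P"
  shows "bsem n (Assert qs P) \<rho> = cyl n qs P * \<rho> * mat_adjoint (cyl n qs P)"
  using P cyl_adj[of P qs n] unfolding is_projector_def by simp

lemma assert_KK:
  assumes wf: "wf_reg n qs" and P: "is_projector (2 ^ length qs) P"
  shows "mat_adjoint (cyl n qs P) * cyl n qs P = cyl n qs P"
  using P cyl_adj[of P qs n] cyl_mult[OF wf, of P P] unfolding is_projector_def by simp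

lemma assert_pos:
  assumes P: "is_projector (2 ^ length qs) P" and r: "positive_op (qdim n) \<rho>"
  shows "positive_op (qdim n) (bsem n (Assert qs P) \<rho>)"
  unfolding assert_eq[OF P] by (rule psd_conj[OF r cyl_carrier])

lemma assert_tr:
  assumes wf: "wf_reg n qs" and P: "is_projector (2 ^ length qs) P" and r: "\<rho> \<in> carrier_mat (qdim n) (qdim n)"
  shows "tr (qdim n) (bsem n (Assert qs P) \<rho>) = tr (qdim n) (cyl n qs P * \<rho>)"
  unfolding assert_eq[OF P] tr_conj[OF cyl_carrier r] assert_KK[OF wf P] ..

lemma assert_split:
  assumes wf: "wf_reg n qs" and P: "is_projector (2 ^ length qs) P" and r: "\<rho> \<in> carrier_mat (qdim n) (qdim n)"
  shows "tr (qdim n) (bsem n (Assert qs P) \<rho>) + tr (qdim n) (bsem n (Assert qs (ortho qs P)) \<rho>) = tr (qdim n) \<rho>"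
proof -
  have Pc: "P \<in> carrier_mat (2 ^ length qs) (2 ^ length qs)" using P unfolding is_projector_def by auto
  have "tr (qdim n) (bsem n (Assert qs P) \<rho>) + tr (qdim n) (bsem n (Assert qs (ortho qs P)) \<rho>)
      = tr (qdim n) (cyl n qs P * \<rho>) + tr (qdim n) (cyl n qs (ortho qs P) * \<rho>)"
    using assert_tr[OF wf P r] assert_tr[OF wf ortho_proj[OF P] r] by simp
  also have "\<dots> = tr (qdim n) ((cyl n qs P + cyl n qs (ortho qs P)) * \<rho>)"
    using add_mult_distrib_mat[OF cyl_carrier cyl_carrier r] tr_add[of "cyl n qs P * \<rho>" "qdim n"] r cyl_carrier
    by (metis mult_carrier_mat)
  also have "\<dots> = tr (qdim n) \<rho>" unfolding cyl_P_ortho[OF wf Pc] using r by simp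
  finally show ?thesis .
qed

lemma mat_fsum_Suc:
  assumes "M K \<in> carrier_mat d d"
  shows "mat_fsum d M (Suc K) = mat_fsum d M K + M K"
  using assms by (intro eq_matI) (auto simp: mat_fsum_def)

lemma mat_fsum_pos:
  "(\<And>k. k < K \<Longrightarrow> positive_op d (M k)) \<Longrightarrow> positive_op d (mat_fsum d M K)"
proof (induction K)
  case 0
  have "mat_fsum d M 0 = 0\<^sub>m d d" by (intro eq_matI) (auto simp: mat_fsum_def)
  then show ?case using psd_zero by simp
next
  case (Suc K)
  have c: "M K \<in> carrier_mat d d" using pos_carrier Suc.prems by simp
  then show ?case using mat_fsum_Suc[of M K d, OF c] psd_add Suc by simp
qed

lemma mat_fsum_tr: "tr d (mat_fsum d M K) = (\<Sum>k<K. tr d (M k))"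
  unfolding tr_def mat_fsum_def by (simp add: sum.swap[of _ "{..<K}"])

lemma sumE:
  assumes wf: "wf_reg n qs" and ab: "a < qdim n" "b < qdim n"
  shows "(\<Sum>i<2 ^ length qs. cyl n qs (mat_adjoint (ket0bra (2 ^ length qs) i) * ket0bra (2 ^ length qs) i) $$ (a, b))
     = (if a = b then 1 else 0)"
proof -
  let ?m = "2 ^ length qs"
  have sub: "set qs \<subseteq> {..<n}" using wf unfolding wf_reg_def by auto
  have "(\<Sum>i<?m. cyl n qs (mat_adjoint (ket0bra ?m i) * ket0bra ?m i) $$ (a, b))
     = (\<Sum>i<?m. if agree n qs a b then (if loc_idx qs a = i \<and> loc_idx qs b = i then 1 else 0) else 0)"
    by (rule sum.cong[OF refl]) (simp add: cyl_index ab E_entry loc_idx_less)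
  also have "\<dots> = (if agree n qs a b \<and> loc_idx qs a = loc_idx qs b then 1 else 0)"
  proof (cases "agree n qs a b \<and> loc_idx qs a = loc_idx qs b")
    case True
    then show ?thesis using loc_idx_less[of qs b] by (simp add: sum.delta')
  next
    case False
    then show ?thesis by (auto intro!: sum.neutral)
  qed
  also have "\<dots> = (if a = b then 1 else 0)"
    using agree_inj[OF sub, of a b] ab agree_refl by (auto simp: qdim_def)
  finally show ?thesis .
qed

lemma init_tr:
  assumes wf: "wf_reg n qs" and r: "\<rho> \<in> carrier_mat (qdim n) (qdim n)"
  shows "tr (qdim n) (bsem n (Init qs) \<rho>) = tr (qdim n) \<rho>"
proof -
  let ?m = "2 ^ length qs" and ?d = "qdim n"
  let ?E = "\<lambda>i. cyl n qs (mat_adjoint (ket0bra ?m i) * ket0bra ?m i)"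
  have kc: "ket0bra ?m i \<in> carrier_mat ?m ?m" for i unfolding ket0bra_def by simp
  have KK: "mat_adjoint (cyl n qs (ket0bra ?m i)) * cyl n qs (ket0bra ?m i) = ?E i" for i
    using cyl_adj[OF kc, of n i] cyl_mult[OF wf adj_carrier[OF kc] kc] by simp
  have "tr ?d (bsem n (Init qs) \<rho>) = (\<Sum>i<?m. tr ?d (cyl n qs (ket0bra ?m i) * \<rho> * mat_adjoint (cyl n qs (ket0bra ?m i))))"
    by (simp add: mat_fsum_tr)
  also have "\<dots> = (\<Sum>i<?m. tr ?d (?E i * \<rho>))"
    by (rule sum.cong[OF refl]) (simp add: tr_conj[OF cyl_carrier r] KK)
  also have "\<dots> = (\<Sum>i<?m. \<Sum>a<?d. \<Sum>b<?d. ?E i $$ (a, b) * \<rho> $$ (b, a))"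
    unfolding tr_def by (rule sum.cong[OF refl], rule sum.cong[OF refl]) (simp add: mult_entry[OF cyl_carrier r])
  also have "\<dots> = (\<Sum>a<?d. \<Sum>b<?d. (\<Sum>i<?m. ?E i $$ (a, b)) * \<rho> $$ (b, a))"
    by (simp add: sum_distrib_right sum.swap[of _ "{..<?m}"])
  also have "\<dots> = (\<Sum>a<?d. \<Sum>b<?d. (if a = b then 1 else 0) * \<rho> $$ (b, a))"
    by (rule sum.cong[OF refl], rule sum.cong[OF refl]) (simp add: sumE[OF wf])
  also have "\<dots> = tr ?d \<rho>" unfolding tr_def
    by (rule sum.cong[OF refl]) (subst sum_one_point, auto)
  finally show ?thesis .
qed

lemma bsem_good:
  assumes wf: "wf_bcmd n e" and r: "positive_op (qdim n) \<rho>"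
  shows "positive_op (qdim n) (bsem n e \<rho>) \<and> Re (tr (qdim n) (bsem n e \<rho>)) \<le> Re (tr (qdim n) \<rho>)"
proof -
  have rc: "\<rho> \<in> carrier_mat (qdim n) (qdim n)" using pos_carrier[OF r] .
  show ?thesis
  proof (cases e)
    case Skip then show ?thesis using r by simp
  next
    case (Init qs)
    then have w: "wf_reg n qs" using wf by simp
    have "positive_op (qdim n) (bsem n (Init qs) \<rho>)"
      by (simp, rule mat_fsum_pos, rule psd_conj[OF r cyl_carrier])
    then show ?thesis using init_tr[OF w rc] Init by simp
  next
    case (Apply qs U)
    then have w: "wf_reg n qs" and U: "is_unitary (2 ^ length qs) U" using wf by auto
    have Uc: "U \<in> carrier_mat (2 ^ length qs) (2 ^ length qs)" and UU: "U * mat_adjoint U = 1\<^sub>m (2 ^ length qs)"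
      using U unfolding is_unitary_def by auto
    have UU': "mat_adjoint U * U = 1\<^sub>m (2 ^ length qs)"
      using mat_mult_left_right_inverse[OF Uc adj_carrier[OF Uc] UU] .
    have KK: "mat_adjoint (cyl n qs U) * cyl n qs U = 1\<^sub>m (qdim n)"
      using cyl_adj[OF Uc, of n] cyl_mult[OF w adj_carrier[OF Uc] Uc] UU' cyl_one[OF w] by simp
    have "tr (qdim n) (bsem n (Apply qs U) \<rho>) = tr (qdim n) \<rho>"
      using tr_conj[OF cyl_carrier rc, of qs U] KK rc by simp
    moreover have "positive_op (qdim n) (bsem n (Apply qs U) \<rho>)"
      using psd_conj[OF r cyl_carrier] by simp
    ultimately show ?thesis using Apply by simp
  next
    case (Assert qs P)
    then have w: "wf_reg n qs" and P: "is_projector (2 ^ length qs) P" using wf by auto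
    have "0 \<le> Re (tr (qdim n) (bsem n (Assert qs (ortho qs P)) \<rho>))"
      using tr_nonneg(2)[OF assert_pos[OF ortho_proj[OF P] r]] .
    then have "Re (tr (qdim n) (bsem n (Assert qs P) \<rho>)) \<le> Re (tr (qdim n) \<rho>)"
      using arg_cong[OF assert_split[OF w P rc], of Re] by simp
    then show ?thesis using assert_pos[OF P r] Assert by simp
  qed
qed




lemma series_good:
  fixes t :: "nat \<Rightarrow> complex mat"
  assumes pos: "\<And>j. positive_op d (t j)" and bd: "\<And>K. (\<Sum>j<K. Re (tr d (t j))) \<le> B"
  shows "positive_op d (mat_suminf d t)" "Re (tr d (mat_suminf d t)) \<le> B"
    "\<And>r c. r < d \<Longrightarrow> c < d \<Longrightarrow> ((\<lambda>j. t j $$ (r, c)) has_sum mat_suminf d t $$ (r, c)) UNIV"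
proof -
  let ?S = "mat_suminf d t"
  have trn: "0 \<le> Re (tr d (t j))" for j using tr_nonneg[OF pos] by auto
  have sumtr: "summable (\<lambda>j. Re (tr d (t j)))"
    by (rule summableI_nonneg_bounded[OF trn bd])
  have nsum: "summable (\<lambda>j. norm (t j $$ (r, c)))" if "r < d" "c < d" for r c
  proof (rule summable_comparison_test[OF _ summable_mult[OF sumtr, of 2]])
    show "\<exists>N. \<forall>n\<ge>N. norm (norm (t n $$ (r, c))) \<le> 2 * Re (tr d (t n))"
      using entry_bound[OF pos that] by auto
  qed
  have esums: "(\<lambda>j. t j $$ (r, c)) sums (?S $$ (r, c))" if "r < d" "c < d" for r c
    using summable_sums[OF summable_norm_cancel[OF nsum[OF that]]] that
    by (simp add: mat_suminf_def)
  show "((\<lambda>j. t j $$ (r, c)) has_sum ?S $$ (r, c)) UNIV" if "r < d" "c < d" for r c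
    by (rule norm_summable_imp_has_sum[OF nsum[OF that] esums[OF that]])
  have Sc: "?S \<in> carrier_mat d d" unfolding mat_suminf_def by simp
  have tc: "t j \<in> carrier_mat d d" for j using pos_carrier[OF pos] .
  show "positive_op d ?S" unfolding pos_def2
  proof (intro conjI ballI Sc)
    fix v :: "complex vec" assume v: "v \<in> carrier_vec d"
    have "(\<lambda>j. qf d (t j) v) sums qf d ?S v"
      unfolding qf_expand[OF Sc v] qf_expand[OF tc v] sum_distrib_left
      by (intro sums_sum sums_mult sums_mult2 esums) auto
    then have s1: "(\<lambda>j. Re (qf d (t j) v)) sums Re (qf d ?S v)"
          and s2: "(\<lambda>j. Im (qf d (t j) v)) sums Im (qf d ?S v)"
      using sums_Re sums_Im by blast+
    have "(\<lambda>j. Im (qf d (t j) v)) = (\<lambda>j. 0)" using pos v unfolding pos_def2 by auto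
    then show "Im (qf d ?S v) = 0" using s2 sums_zero sums_unique2 by metis
    show "0 \<le> Re (qf d ?S v)"
      using sums_le[OF _ sums_zero s1] pos v unfolding pos_def2 by auto
  qed
  have "(\<lambda>j. tr d (t j)) sums tr d ?S"
    unfolding tr_def by (intro sums_sum esums) auto
  then have s3: "(\<lambda>j. Re (tr d (t j))) sums Re (tr d ?S)" using sums_Re by blast
  show "Re (tr d ?S) \<le> B"
    using suminf_le_const[OF sumtr bd] sums_unique[OF s3] by simp
qed

definition rho_seq :: "nat \<Rightarrow> nat list \<Rightarrow> complex mat \<Rightarrow> prog \<Rightarrow> complex mat \<Rightarrow> nat \<Rightarrow> complex mat" where
  "rho_seq n qs P S \<rho> i = ((csem S n \<circ> bsem n (Assert qs P)) ^^ i) \<rho>"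

definition tseq :: "nat \<Rightarrow> nat list \<Rightarrow> complex mat \<Rightarrow> prog \<Rightarrow> complex mat \<Rightarrow> nat \<Rightarrow> complex mat" where
  "tseq n qs P S \<rho> i = bsem n (Assert qs (ortho qs P)) (rho_seq n qs P S \<rho> i)"

lemma csem_while: "csem (While qs P S) n \<rho> = mat_suminf (qdim n) (tseq n qs P S \<rho>)"
  unfolding tseq_def rho_seq_def by simp

lemma while_facts:
  assumes IHS: "\<And>\<sigma>. positive_op (qdim n) \<sigma> \<Longrightarrow> positive_op (qdim n) (csem S n \<sigma>) \<and> Re (tr (qdim n) (csem S n \<sigma>)) \<le> Re (tr (qdim n) \<sigma>)"
    and w: "wf_reg n qs" and P: "is_projector (2 ^ length qs) P" and r: "positive_op (qdim n) \<rho>"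
  shows "\<And>i. positive_op (qdim n) (rho_seq n qs P S \<rho> i)"
    "\<And>j. positive_op (qdim n) (tseq n qs P S \<rho> j)"
    "\<And>K. (\<Sum>j<K. Re (tr (qdim n) (tseq n qs P S \<rho> j))) + Re (tr (qdim n) (rho_seq n qs P S \<rho> K)) \<le> Re (tr (qdim n) \<rho>)"
proof -
  let ?d = "qdim n"
  show rp: "positive_op ?d (rho_seq n qs P S \<rho> i)" for i
  proof (induction i)
    case 0 then show ?case using r by (simp add: rho_seq_def)
  next
    case (Suc i)
    then show ?case using IHS[OF assert_pos[OF P Suc]] by (simp add: rho_seq_def)
  qed
  show tp: "positive_op ?d (tseq n qs P S \<rho> j)" for j
    unfolding tseq_def by (rule assert_pos[OF ortho_proj[OF P] rp])
  show "(\<Sum>j<K. Re (tr ?d (tseq n qs P S \<rho> j))) + Re (tr ?d (rho_seq n qs P S \<rho> K)) \<le> Re (tr ?d \<rho>)" for K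
  proof (induction K)
    case 0 then show ?case by (simp add: rho_seq_def)
  next
    case (Suc K)
    let ?r = "rho_seq n qs P S \<rho> K"
    have e: "rho_seq n qs P S \<rho> (Suc K) = csem S n (bsem n (Assert qs P) ?r)" by (simp add: rho_seq_def)
    have a: "Re (tr ?d (rho_seq n qs P S \<rho> (Suc K))) \<le> Re (tr ?d (bsem n (Assert qs P) ?r))"
      unfolding e using IHS[OF assert_pos[OF P rp]] by simp
    have b: "Re (tr ?d (bsem n (Assert qs P) ?r)) + Re (tr ?d (tseq n qs P S \<rho> K)) = Re (tr ?d ?r)"
      using arg_cong[OF assert_split[OF w P pos_carrier[OF rp]], of Re] unfolding tseq_def by simp
    show ?case using Suc.IH a b by simp
  qed
qed

lemma csem_good:
  "wf_prog n S \<Longrightarrow> positive_op (qdim n) \<rho> \<Longrightarrow>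
   positive_op (qdim n) (csem S n \<rho>) \<and> Re (tr (qdim n) (csem S n \<rho>)) \<le> Re (tr (qdim n) \<rho>)"
proof (induction S arbitrary: \<rho>)
  case (Basic e) then show ?case using bsem_good by simp
next
  case (Seq S0 S1)
  then show ?case by fastforce
next
  case (If qs P S1 S0)
  let ?d = "qdim n"
  have w: "wf_reg n qs" and P: "is_projector (2 ^ length qs) P" and ws: "wf_prog n S1" "wf_prog n S0"
    using If.prems by auto
  let ?a = "bsem n (Assert qs P) \<rho>" and ?b = "bsem n (Assert qs (ortho qs P)) \<rho>"
  have pa: "positive_op ?d ?a" and pb: "positive_op ?d ?b"
    using assert_pos[OF P If.prems(2)] assert_pos[OF ortho_proj[OF P] If.prems(2)] by auto
  have g1: "positive_op ?d (csem S1 n ?a) \<and> Re (tr ?d (csem S1 n ?a)) \<le> Re (tr ?d ?a)"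
    using If.IH(1)[OF ws(1) pa] .
  have g0: "positive_op ?d (csem S0 n ?b) \<and> Re (tr ?d (csem S0 n ?b)) \<le> Re (tr ?d ?b)"
    using If.IH(2)[OF ws(2) pb] .
  have "tr ?d (csem S1 n ?a + csem S0 n ?b) = tr ?d (csem S1 n ?a) + tr ?d (csem S0 n ?b)"
    using g1 g0 pos_carrier tr_add by blast
  moreover have "Re (tr ?d ?a) + Re (tr ?d ?b) = Re (tr ?d \<rho>)"
    using arg_cong[OF assert_split[OF w P pos_carrier[OF If.prems(2)]], of Re] by simp
  ultimately show ?case using g1 g0 psd_add by simp
next
  case (While qs P S)
  let ?d = "qdim n"
  have w: "wf_reg n qs" and P: "is_projector (2 ^ length qs) P" and ws: "wf_prog n S"
    using While.prems by auto
  note F = while_facts[OF While.IH[OF ws] w P While.prems(2)]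
  have bd: "(\<Sum>j<K. Re (tr ?d (tseq n qs P S \<rho> j))) \<le> Re (tr ?d \<rho>)" for K
    using F(3)[of K] tr_nonneg(2)[OF F(1)[of K]] by linarith
  show ?case unfolding csem_while using series_good(1,2)[OF F(2) bd] by simp
qed

lemma csem_pdo: "wf_prog n S \<Longrightarrow> \<rho> \<in> pdo n \<Longrightarrow> csem S n \<rho> \<in> pdo n"
  using csem_good[of n S \<rho>] unfolding pdo_iff by auto




lemma while_series:
  assumes wf: "wf_prog n (While qs P S)" and r: "\<rho> \<in> pdo n"
  shows "\<And>j. tseq n qs P S \<rho> j \<in> pdo n"
    "\<And>r c. r < qdim n \<Longrightarrow> c < qdim n \<Longrightarrow>
      ((\<lambda>j. tseq n qs P S \<rho> j $$ (r, c)) has_sum csem (While qs P S) n \<rho> $$ (r, c)) UNIV"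
proof -
  have w: "wf_reg n qs" and P: "is_projector (2 ^ length qs) P" and ws: "wf_prog n S"
    using wf by auto
  have rp: "positive_op (qdim n) \<rho>" and r1: "Re (tr (qdim n) \<rho>) \<le> 1" using r unfolding pdo_iff by auto
  note F = while_facts[OF csem_good[OF ws] w P rp]
  have bd: "(\<Sum>j<K. Re (tr (qdim n) (tseq n qs P S \<rho> j))) \<le> Re (tr (qdim n) \<rho>)" for K
    using F(3)[of K] tr_nonneg(2)[OF F(1)[of K]] by linarith
  show "tseq n qs P S \<rho> j \<in> pdo n" for j
  proof -
    have "Re (tr (qdim n) (tseq n qs P S \<rho> j)) \<le> (\<Sum>i<Suc j. Re (tr (qdim n) (tseq n qs P S \<rho> i)))"
      by (rule member_le_sum) (use tr_nonneg(2)[OF F(2)] in auto)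
    then show ?thesis unfolding pdo_iff using F(2) bd[of "Suc j"] r1 by auto
  qed
  show "((\<lambda>j. tseq n qs P S \<rho> j $$ (r, c)) has_sum csem (While qs P S) n \<rho> $$ (r, c)) UNIV"
    if "r < qdim n" "c < qdim n" for r c
    unfolding csem_while using series_good(3)[OF F(2) bd that] .
qed

lemma asem_mono:
  assumes mab: "\<forall>e. wf_bcmd n e \<longrightarrow> mono (ab e)"
  shows "wf_prog n S \<Longrightarrow> mono (asem ab S)"
proof (induction S)
  case (Basic e) then show ?case using mab by simp
next
  case (Seq S0 S1)
  then have m0: "mono (asem ab S0)" and m1: "mono (asem ab S1)" by auto
  show ?case
  proof (rule monoI)
    fix a b :: 'a assume "a \<le> b"
    then show "asem ab (Seq S0 S1) a \<le> asem ab (Seq S0 S1) b"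
      using monoD[OF m1 monoD[OF m0]] by simp
  qed
next
  case (If qs P S1 S0)
  then have m1: "mono (asem ab S1)" and m0: "mono (asem ab S0)"
    and ma: "mono (ab (Assert qs P))" and mb: "mono (ab (Assert qs (ortho qs P)))"
    using mab ortho_proj by auto
  show ?case
  proof (rule monoI)
    fix a b :: 'a assume ab: "a \<le> b"
    show "asem ab (If qs P S1 S0) a \<le> asem ab (If qs P S1 S0) b"
      using sup_mono[OF monoD[OF m1 monoD[OF ma ab]] monoD[OF m0 monoD[OF mb ab]]] by simp
  qed
next
  case (While qs P S)
  then have m: "mono (asem ab S)" and ma: "mono (ab (Assert qs P))" and mb: "mono (ab (Assert qs (ortho qs P)))"
    and ms: "mono (ab Skip)"
    using mab ortho_proj by auto
  have mF: "mono (asem ab S \<circ> ab (Assert qs P))"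
  proof (rule monoI)
    fix a b :: 'a assume "a \<le> b"
    then show "(asem ab S \<circ> ab (Assert qs P)) a \<le> (asem ab S \<circ> ab (Assert qs P)) b"
      using monoD[OF m monoD[OF ma]] by simp
  qed
  have mi: "mono (if i = 0 then ab Skip else (asem ab S \<circ> ab (Assert qs P)) ^^ i)" for i
    using ms mono_pow[OF mF] by simp
  show ?case
  proof (rule monoI)
    fix a b :: 'a assume ab: "a \<le> b"
    show "asem ab (While qs P S) a \<le> asem ab (While qs P S) b"
      unfolding asem.simps
      by (rule SUP_least, rule SUP_upper2[OF UNIV_I], rule monoD[OF mb], rule monoD[OF mi ab])
  qed
qed

context
  fixes n :: nat and \<alpha> :: "complex mat set \<Rightarrow> 'a::complete_lattice" and \<gamma> :: "'a \<Rightarrow> complex mat set"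
  assumes ws: "well_structured n \<alpha> \<gamma>"
begin

lemma ws1: "\<forall>R R'. R \<subseteq> R' \<and> R' \<subseteq> pdo n \<longrightarrow> \<alpha> R \<le> \<alpha> R'"
  using ws[unfolded well_structured_def] by (rule conjunct1)

lemma ws4: "\<forall>R a. R \<subseteq> pdo n \<longrightarrow> (R \<subseteq> \<gamma> a \<longleftrightarrow> \<alpha> R \<le> a)"
  using ws[unfolded well_structured_def] by (elim conjE)

lemma a_mono: "R \<subseteq> R' \<Longrightarrow> R' \<subseteq> pdo n \<Longrightarrow> \<alpha> R \<le> \<alpha> R'"
  using ws1 by blast

lemma a_gc: "R \<subseteq> pdo n \<Longrightarrow> (R \<subseteq> \<gamma> a \<longleftrightarrow> \<alpha> R \<le> a)"
  using ws4 by blast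

lemma a_UN:
  assumes "\<And>i. i \<in> I \<Longrightarrow> R i \<subseteq> pdo n"
  shows "\<alpha> (\<Union>i\<in>I. R i) = (SUP i\<in>I. \<alpha> (R i))"
proof (rule antisym)
  have U: "(\<Union>i\<in>I. R i) \<subseteq> pdo n" using assms by auto
  show "\<alpha> (\<Union>i\<in>I. R i) \<le> (SUP i\<in>I. \<alpha> (R i))"
    unfolding a_gc[OF U, symmetric]
  proof (rule UN_least)
    fix i assume i: "i \<in> I"
    show "R i \<subseteq> \<gamma> (SUP i\<in>I. \<alpha> (R i))"
      unfolding a_gc[OF assms[OF i]] using i by (rule SUP_upper)
  qed
  show "(SUP i\<in>I. \<alpha> (R i)) \<le> \<alpha> (\<Union>i\<in>I. R i)"
    by (rule SUP_least, rule a_mono) (use U in auto)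
qed

lemma a_img:
  assumes "f ` R \<subseteq> pdo n"
  shows "\<alpha> (f ` R) = (SUP x\<in>R. \<alpha> {f x})"
proof -
  have "f ` R = (\<Union>x\<in>R. {f x})" by auto
  then show ?thesis using a_UN[of R "\<lambda>x. {f x}"] assms by auto
qed

lemma ws_b:
  fixes I :: "nat set" and t :: "nat \<Rightarrow> complex mat" and x :: "nat \<Rightarrow> real"
  assumes "I \<noteq> {} \<and> (\<forall>i\<in>I. t i \<in> pdo n \<and> x i > 0) \<and> S \<in> pdo n \<and>
     (\<forall>r<qdim n. \<forall>c<qdim n. ((\<lambda>i. complex_of_real (x i) * t i $$ (r, c)) has_sum S $$ (r, c)) I)"
  shows "\<alpha> {S} = (SUP i\<in>I. \<alpha> {t i})"
proof -
  have "\<forall>(I :: nat set) (\<rho> :: nat \<Rightarrow> complex mat) (x :: nat \<Rightarrow> real) S.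
        I \<noteq> {} \<and> (\<forall>i\<in>I. \<rho> i \<in> pdo n \<and> x i > 0) \<and> S \<in> pdo n \<and>
        (\<forall>r<qdim n. \<forall>c<qdim n. ((\<lambda>i. complex_of_real (x i) * \<rho> i $$ (r, c)) has_sum S $$ (r, c)) I)
        \<longrightarrow> \<alpha> {S} = (SUP i\<in>I. \<alpha> {\<rho> i})"
    using ws[unfolded well_structured_def] by (elim conjE)
  then show ?thesis using assms by (elim allE impE)
qed

lemma a_series:
  fixes I :: "nat set" and t :: "nat \<Rightarrow> complex mat"
  assumes I: "I \<noteq> {}" and t: "\<And>i. i \<in> I \<Longrightarrow> t i \<in> pdo n" and S: "S \<in> pdo n"
    and hs: "\<And>r c. r < qdim n \<Longrightarrow> c < qdim n \<Longrightarrow> ((\<lambda>i. t i $$ (r, c)) has_sum S $$ (r, c)) I"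
  shows "\<alpha> {S} = (SUP i\<in>I. \<alpha> {t i})"
  by (rule ws_b[where x = "\<lambda>_. 1"]) (use I t S hs in auto)

lemma a_plus:
  assumes A: "A \<in> pdo n" and B: "B \<in> pdo n" and AB: "A + B \<in> pdo n"
  shows "\<alpha> {A + B} = sup (\<alpha> {A}) (\<alpha> {B})"
proof -
  define \<rho> where "\<rho> = (\<lambda>i::nat. if i = 0 then A else B)"
  have Ac: "A \<in> carrier_mat (qdim n) (qdim n)" and Bc: "B \<in> carrier_mat (qdim n) (qdim n)"
    using A B pos_carrier unfolding pdo_iff by auto
  have hs: "((\<lambda>i. \<rho> i $$ (r, c)) has_sum (A + B) $$ (r, c)) {0, 1}"
    if "r < qdim n" "c < qdim n" for r c
    by (rule has_sum_finiteI) (use Ac Bc that in \<open>simp_all add: \<rho>_def\<close>)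
  have "\<alpha> {A + B} = (SUP i\<in>{0, 1}. \<alpha> {\<rho> i})"
    by (rule a_series) (use hs A B AB in \<open>auto simp: \<rho>_def\<close>)
  then show ?thesis by (simp add: \<rho>_def)
qed

lemma img_pdo: "wf_prog n S \<Longrightarrow> R \<subseteq> pdo n \<Longrightarrow> csem S n ` R \<subseteq> pdo n"
  using csem_pdo by blast

lemma if_eq:
  assumes wf: "wf_prog n (If qs P S1 S0)" and R: "R \<subseteq> pdo n"
  shows "\<alpha> (csem (If qs P S1 S0) n ` R) =
    sup (\<alpha> (csem S1 n ` (bsem n (Assert qs P) ` R))) (\<alpha> (csem S0 n ` (bsem n (Assert qs (ortho qs P)) ` R)))"
proof -
  let ?A = "csem (Seq (Basic (Assert qs P)) S1) n" and ?B = "csem (Seq (Basic (Assert qs (ortho qs P))) S0) n"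
  have wA: "wf_prog n (Seq (Basic (Assert qs P)) S1)" and wB: "wf_prog n (Seq (Basic (Assert qs (ortho qs P))) S0)"
    using wf ortho_proj by auto
  have f: "csem (If qs P S1 S0) n \<rho> = ?A \<rho> + ?B \<rho>" for \<rho> by simp
  have "\<alpha> (csem (If qs P S1 S0) n ` R) = (SUP \<rho>\<in>R. \<alpha> {csem (If qs P S1 S0) n \<rho>})"
    by (rule a_img[OF img_pdo[OF wf R]])
  also have "\<dots> = (SUP \<rho>\<in>R. sup (\<alpha> {?A \<rho>}) (\<alpha> {?B \<rho>}))"
  proof (rule SUP_cong[OF refl])
    fix \<rho> assume "\<rho> \<in> R"
    then have r: "\<rho> \<in> pdo n" using R by auto
    show "\<alpha> {csem (If qs P S1 S0) n \<rho>} = sup (\<alpha> {?A \<rho>}) (\<alpha> {?B \<rho>})"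
      unfolding f by (rule a_plus) (use csem_pdo[OF wA r] csem_pdo[OF wB r] csem_pdo[OF wf r] f in auto)
  qed
  also have "\<dots> = sup (SUP \<rho>\<in>R. \<alpha> {?A \<rho>}) (SUP \<rho>\<in>R. \<alpha> {?B \<rho>})"
    by (rule Complete_Lattices.SUP_sup_distrib[symmetric])
  also have "\<dots> = sup (\<alpha> (?A ` R)) (\<alpha> (?B ` R))"
    using a_img[OF img_pdo[OF wA R]] a_img[OF img_pdo[OF wB R]] by simp
  finally show ?thesis by (simp add: image_image)
qed

lemma iter_pdo:
  assumes wf: "wf_prog n (While qs P S)" and R: "R \<subseteq> pdo n"
  shows "((csem S n \<circ> bsem n (Assert qs P)) ^^ j) ` R \<subseteq> pdo n"
proof (induction j)
  case 0 then show ?case using R by simp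
next
  case (Suc j)
  have w: "wf_prog n (Seq (Basic (Assert qs P)) S)" using wf by auto
  have e: "csem (Seq (Basic (Assert qs P)) S) n = csem S n \<circ> bsem n (Assert qs P)" by simp
  have "((csem S n \<circ> bsem n (Assert qs P)) ^^ Suc j) ` R
      = (csem S n \<circ> bsem n (Assert qs P)) ` (((csem S n \<circ> bsem n (Assert qs P)) ^^ j) ` R)"
    by (simp only: funpow.simps(2) image_comp)
  then show ?case using img_pdo[OF w Suc] unfolding e by (simp only:)
qed

lemma while_eq:
  assumes wf: "wf_prog n (While qs P S)" and R: "R \<subseteq> pdo n"
  shows "\<alpha> (csem (While qs P S) n ` R) =
    (SUP j. \<alpha> (bsem n (Assert qs (ortho qs P)) ` (((csem S n \<circ> bsem n (Assert qs P)) ^^ j) ` R)))"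
proof -
  have "\<alpha> (csem (While qs P S) n ` R) = (SUP \<rho>\<in>R. \<alpha> {csem (While qs P S) n \<rho>})"
    by (rule a_img[OF img_pdo[OF wf R]])
  also have "\<dots> = (SUP \<rho>\<in>R. SUP j. \<alpha> {tseq n qs P S \<rho> j})"
  proof (rule SUP_cong[OF refl])
    fix \<rho> assume "\<rho> \<in> R"
    then have r: "\<rho> \<in> pdo n" using R by auto
    show "\<alpha> {csem (While qs P S) n \<rho>} = (SUP j. \<alpha> {tseq n qs P S \<rho> j})"
      by (rule a_series) (use while_series[OF wf r] csem_pdo[OF wf r] in auto)
  qed
  also have "\<dots> = (SUP j. SUP \<rho>\<in>R. \<alpha> {tseq n qs P S \<rho> j})"
    by (rule SUP_commute)
  also have "\<dots> = (SUP j. \<alpha> ((\<lambda>\<rho>. tseq n qs P S \<rho> j) ` R))"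
  proof (rule SUP_cong[OF refl])
    fix j
    show "(SUP \<rho>\<in>R. \<alpha> {tseq n qs P S \<rho> j}) = \<alpha> ((\<lambda>\<rho>. tseq n qs P S \<rho> j) ` R)"
      by (rule a_img[symmetric]) (use while_series(1)[OF wf] R in auto)
  qed
  finally show ?thesis by (simp add: tseq_def rho_seq_def image_image)
qed

end




context
  fixes n :: nat and \<alpha> :: "complex mat set \<Rightarrow> 'a::complete_lattice" and \<gamma> :: "'a \<Rightarrow> complex mat set"
    and ab :: "bcmd \<Rightarrow> 'a \<Rightarrow> 'a"
  assumes ws: "well_structured n \<alpha> \<gamma>" and mab: "\<forall>e. wf_bcmd n e \<longrightarrow> mono (ab e)"
begin

lemma basic_img: "wf_bcmd n e \<Longrightarrow> R \<subseteq> pdo n \<Longrightarrow> bsem n e ` R \<subseteq> pdo n"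
  using img_pdo[OF ws, of "Basic e" R] by simp

lemma sound_all:
  assumes sb: "\<forall>e. wf_bcmd n e \<longrightarrow> sound_abs n \<alpha> (bsem n e) (ab e)"
  shows "wf_prog n S \<Longrightarrow> sound_abs n \<alpha> (csem S n) (asem ab S)"
proof (induction S)
  case (Basic e) then show ?case using sb by simp
next
  case (Seq S0 S1)
  then have w0: "wf_prog n S0" and w1: "wf_prog n S1" by auto
  have I0: "sound_abs n \<alpha> (csem S0 n) (asem ab S0)" and I1: "sound_abs n \<alpha> (csem S1 n) (asem ab S1)"
    using Seq w0 w1 by auto
  show ?case unfolding sound_abs_def
  proof (intro allI impI)
    fix R assume R: "R \<subseteq> pdo n"
    have X: "csem S0 n ` R \<subseteq> pdo n" using img_pdo[OF ws w0 R] .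
    have "\<alpha> (csem (Seq S0 S1) n ` R) = \<alpha> (csem S1 n ` (csem S0 n ` R))" by (simp add: image_comp)
    also have "\<dots> \<le> asem ab S1 (\<alpha> (csem S0 n ` R))" using I1 X unfolding sound_abs_def by blast
    also have "\<dots> \<le> asem ab S1 (asem ab S0 (\<alpha> R))"
      using monoD[OF asem_mono[OF mab w1]] I0 R unfolding sound_abs_def by blast
    finally show "\<alpha> (csem (Seq S0 S1) n ` R) \<le> asem ab (Seq S0 S1) (\<alpha> R)" by simp
  qed
next
  case (If qs P S1 S0)
  then have w: "wf_prog n (If qs P S1 S0)" and w0: "wf_prog n S0" and w1: "wf_prog n S1"
    and wa: "wf_bcmd n (Assert qs P)" and wb: "wf_bcmd n (Assert qs (ortho qs P))" using ortho_proj by auto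
  have I0: "sound_abs n \<alpha> (csem S0 n) (asem ab S0)" and I1: "sound_abs n \<alpha> (csem S1 n) (asem ab S1)"
    using If w0 w1 by auto
  show ?case unfolding sound_abs_def
  proof (intro allI impI)
    fix R assume R: "R \<subseteq> pdo n"
    have g: "\<alpha> (csem S' n ` (bsem n e ` R)) \<le> asem ab S' (ab e (\<alpha> R))"
      if "wf_prog n S'" "wf_bcmd n e" "sound_abs n \<alpha> (csem S' n) (asem ab S')" for S' e
    proof -
      have "\<alpha> (csem S' n ` (bsem n e ` R)) \<le> asem ab S' (\<alpha> (bsem n e ` R))"
        using that(3) basic_img[OF that(2) R] unfolding sound_abs_def by blast
      also have "\<dots> \<le> asem ab S' (ab e (\<alpha> R))"
        using monoD[OF asem_mono[OF mab that(1)]] sb that(2) R unfolding sound_abs_def by blast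
      finally show ?thesis .
    qed
    show "\<alpha> (csem (If qs P S1 S0) n ` R) \<le> asem ab (If qs P S1 S0) (\<alpha> R)"
      unfolding if_eq[OF ws w R] using sup_mono[OF g[OF w1 wa I1] g[OF w0 wb I0]] by simp
  qed
next
  case (While qs P S)
  then have w: "wf_prog n (While qs P S)" and ws': "wf_prog n S"
    and wa: "wf_bcmd n (Assert qs P)" and wb: "wf_bcmd n (Assert qs (ortho qs P))" using ortho_proj by auto
  have I: "sound_abs n \<alpha> (csem S n) (asem ab S)" using While ws' by auto
  define T where "T = csem S n \<circ> bsem n (Assert qs P)"
  define F where "F = asem ab S \<circ> ab (Assert qs P)"
  show ?case unfolding sound_abs_def
  proof (intro allI impI)
    fix R assume R: "R \<subseteq> pdo n"
    have X: "(T ^^ j) ` R \<subseteq> pdo n" for j unfolding T_def using iter_pdo[OF ws w R] .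
    have it: "\<alpha> ((T ^^ j) ` R) \<le> (F ^^ j) (\<alpha> R)" for j
    proof (induction j)
      case 0 then show ?case by simp
    next
      case (Suc j)
      have e1: "(T ^^ Suc j) ` R = csem S n ` (bsem n (Assert qs P) ` ((T ^^ j) ` R))"
        unfolding funpow.simps(2) image_comp[symmetric] T_def by (simp only: image_comp o_assoc)
      have e3: "(F ^^ Suc j) (\<alpha> R) = asem ab S (ab (Assert qs P) ((F ^^ j) (\<alpha> R)))"
        by (simp only: funpow.simps(2) o_apply F_def)
      have "\<alpha> ((T ^^ Suc j) ` R) \<le> asem ab S (\<alpha> (bsem n (Assert qs P) ` ((T ^^ j) ` R)))"
        unfolding e1 using I basic_img[OF wa X] unfolding sound_abs_def by blast
      also have "\<dots> \<le> asem ab S (ab (Assert qs P) (\<alpha> ((T ^^ j) ` R)))"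
        using monoD[OF asem_mono[OF mab ws']] sb wa X unfolding sound_abs_def by blast
      also have "\<dots> \<le> asem ab S (ab (Assert qs P) ((F ^^ j) (\<alpha> R)))"
        using monoD[OF asem_mono[OF mab ws'] monoD[OF mab[rule_format, OF wa] Suc.IH]] .
      finally show ?case unfolding e3 .
    qed
    have s0': "sound_abs n \<alpha> (bsem n Skip) (ab Skip)" using sb by simp
    have sk: "bsem n Skip ` R = R" by auto
    have s0: "\<alpha> R \<le> ab Skip (\<alpha> R)" using s0'[unfolded sound_abs_def, rule_format, OF R] unfolding sk .
    have each: "\<alpha> (bsem n (Assert qs (ortho qs P)) ` ((T ^^ j) ` R))
        \<le> ab (Assert qs (ortho qs P)) ((if j = 0 then ab Skip else F ^^ j) (\<alpha> R))" for j
    proof -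
      have "\<alpha> (bsem n (Assert qs (ortho qs P)) ` ((T ^^ j) ` R)) \<le> ab (Assert qs (ortho qs P)) (\<alpha> ((T ^^ j) ` R))"
        using sb wb X unfolding sound_abs_def by blast
      also have "\<dots> \<le> ab (Assert qs (ortho qs P)) ((if j = 0 then ab Skip else F ^^ j) (\<alpha> R))"
        by (rule monoD[OF mab[rule_format, OF wb]]) (use it[of j] s0 in auto)
      finally show ?thesis .
    qed
    show "\<alpha> (csem (While qs P S) n ` R) \<le> asem ab (While qs P S) (\<alpha> R)"
      unfolding while_eq[OF ws w R] asem.simps T_def[symmetric] F_def[symmetric] by (rule SUP_mono') (rule each)
  qed
qed

lemma complete_all:
  assumes sb: "\<forall>e. wf_bcmd n e \<longrightarrow> complete_abs n \<alpha> (bsem n e) (ab e)"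
  shows "wf_prog n S \<Longrightarrow> complete_abs n \<alpha> (csem S n) (asem ab S)"
proof (induction S)
  case (Basic e) then show ?case using sb by simp
next
  case (Seq S0 S1)
  then have w0: "wf_prog n S0" and w1: "wf_prog n S1" by auto
  have I0: "complete_abs n \<alpha> (csem S0 n) (asem ab S0)" and I1: "complete_abs n \<alpha> (csem S1 n) (asem ab S1)"
    using Seq w0 w1 by auto
  show ?case unfolding complete_abs_def
  proof (intro allI impI)
    fix R assume R: "R \<subseteq> pdo n"
    have X: "csem S0 n ` R \<subseteq> pdo n" using img_pdo[OF ws w0 R] .
    have "\<alpha> (csem (Seq S0 S1) n ` R) = \<alpha> (csem S1 n ` (csem S0 n ` R))" by (simp add: image_comp)
    also have "\<dots> = asem ab S1 (\<alpha> (csem S0 n ` R))" using I1 X unfolding complete_abs_def by blast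
    also have "\<dots> = asem ab S1 (asem ab S0 (\<alpha> R))"
      using I0 R unfolding complete_abs_def by simp
    finally show "\<alpha> (csem (Seq S0 S1) n ` R) = asem ab (Seq S0 S1) (\<alpha> R)" by simp
  qed
next
  case (If qs P S1 S0)
  then have w: "wf_prog n (If qs P S1 S0)" and w0: "wf_prog n S0" and w1: "wf_prog n S1"
    and wa: "wf_bcmd n (Assert qs P)" and wb: "wf_bcmd n (Assert qs (ortho qs P))" using ortho_proj by auto
  have I0: "complete_abs n \<alpha> (csem S0 n) (asem ab S0)" and I1: "complete_abs n \<alpha> (csem S1 n) (asem ab S1)"
    using If w0 w1 by auto
  show ?case unfolding complete_abs_def
  proof (intro allI impI)
    fix R assume R: "R \<subseteq> pdo n"
    have g: "\<alpha> (csem S' n ` (bsem n e ` R)) = asem ab S' (ab e (\<alpha> R))"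
      if "wf_prog n S'" "wf_bcmd n e" "complete_abs n \<alpha> (csem S' n) (asem ab S')" for S' e
    proof -
      have "\<alpha> (csem S' n ` (bsem n e ` R)) = asem ab S' (\<alpha> (bsem n e ` R))"
        using that(3) basic_img[OF that(2) R] unfolding complete_abs_def by blast
      also have "\<dots> = asem ab S' (ab e (\<alpha> R))"
        using sb that(2) R unfolding complete_abs_def by simp
      finally show ?thesis .
    qed
    show "\<alpha> (csem (If qs P S1 S0) n ` R) = asem ab (If qs P S1 S0) (\<alpha> R)"
      unfolding if_eq[OF ws w R] using g[OF w1 wa I1] g[OF w0 wb I0] by simp
  qed
next
  case (While qs P S)
  then have w: "wf_prog n (While qs P S)" and ws': "wf_prog n S"
    and wa: "wf_bcmd n (Assert qs P)" and wb: "wf_bcmd n (Assert qs (ortho qs P))" using ortho_proj by auto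
  have I: "complete_abs n \<alpha> (csem S n) (asem ab S)" using While ws' by auto
  define T where "T = csem S n \<circ> bsem n (Assert qs P)"
  define F where "F = asem ab S \<circ> ab (Assert qs P)"
  show ?case unfolding complete_abs_def
  proof (intro allI impI)
    fix R assume R: "R \<subseteq> pdo n"
    have X: "(T ^^ j) ` R \<subseteq> pdo n" for j unfolding T_def using iter_pdo[OF ws w R] .
    have it: "\<alpha> ((T ^^ j) ` R) = (F ^^ j) (\<alpha> R)" for j
    proof (induction j)
      case 0 then show ?case by simp
    next
      case (Suc j)
      have e1: "(T ^^ Suc j) ` R = csem S n ` (bsem n (Assert qs P) ` ((T ^^ j) ` R))"
        unfolding funpow.simps(2) image_comp[symmetric] T_def by (simp only: image_comp o_assoc)
      have e3: "(F ^^ Suc j) (\<alpha> R) = asem ab S (ab (Assert qs P) ((F ^^ j) (\<alpha> R)))"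
        by (simp only: funpow.simps(2) o_apply F_def)
      have "\<alpha> ((T ^^ Suc j) ` R) = asem ab S (\<alpha> (bsem n (Assert qs P) ` ((T ^^ j) ` R)))"
        unfolding e1 using I basic_img[OF wa X] unfolding complete_abs_def by blast
      also have "\<dots> = asem ab S (ab (Assert qs P) (\<alpha> ((T ^^ j) ` R)))"
      proof -
        have c: "\<alpha> (bsem n (Assert qs P) ` ((T ^^ j) ` R)) = ab (Assert qs P) (\<alpha> ((T ^^ j) ` R))"
          using sb wa X unfolding complete_abs_def by blast
        show ?thesis unfolding c ..
      qed
      also have "\<dots> = asem ab S (ab (Assert qs P) ((F ^^ j) (\<alpha> R)))"
        unfolding Suc.IH ..
      finally show ?case unfolding e3 .
    qed
    have s0': "complete_abs n \<alpha> (bsem n Skip) (ab Skip)" using sb by simp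
    have sk: "bsem n Skip ` R = R" by auto
    have s0: "\<alpha> R = ab Skip (\<alpha> R)" using s0'[unfolded complete_abs_def, rule_format, OF R] unfolding sk .
    have each: "\<alpha> (bsem n (Assert qs (ortho qs P)) ` ((T ^^ j) ` R))
        = ab (Assert qs (ortho qs P)) ((if j = 0 then ab Skip else F ^^ j) (\<alpha> R))" for j
    proof -
      have "\<alpha> (bsem n (Assert qs (ortho qs P)) ` ((T ^^ j) ` R)) = ab (Assert qs (ortho qs P)) (\<alpha> ((T ^^ j) ` R))"
        using sb wb X unfolding complete_abs_def by blast
      also have "\<dots> = ab (Assert qs (ortho qs P)) ((if j = 0 then ab Skip else F ^^ j) (\<alpha> R))"
        using it[of j] s0 by auto
      finally show ?thesis .
    qed
    show "\<alpha> (csem (While qs P S) n ` R) = asem ab (While qs P S) (\<alpha> R)"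
      unfolding while_eq[OF ws w R] asem.simps T_def[symmetric] F_def[symmetric] by (rule SUP_cong[OF refl]) (rule each)
  qed
qed

end

theorem mainTheorem5:
  fixes n :: nat
    and \<alpha> :: "complex mat set \<Rightarrow> 'a::complete_lattice"
    and \<gamma> :: "'a \<Rightarrow> complex mat set"
    and ab :: "bcmd \<Rightarrow> 'a \<Rightarrow> 'a"
  assumes ws: "well_structured n \<alpha> \<gamma>"
    and mono_ab: "\<forall>e. wf_bcmd n e \<longrightarrow> mono (ab e)"
  shows "((\<forall>e. wf_bcmd n e \<longrightarrow> sound_abs n \<alpha> (bsem n e) (ab e)) \<longrightarrow>
           (\<forall>S. wf_prog n S \<longrightarrow> sound_abs n \<alpha> (csem S n) (asem ab S))) \<and>
         ((\<forall>e. wf_bcmd n e \<longrightarrow> complete_abs n \<alpha> (bsem n e) (ab e)) \<longrightarrow>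
           (\<forall>S. wf_prog n S \<longrightarrow> complete_abs n \<alpha> (csem S n) (asem ab S)))"
  using sound_all[OF ws mono_ab] complete_all[OF ws mono_ab] by blast



end
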